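(* For all integers $n_1\ge 3$ and $n_2\ge 3$, $\lambda_3(P_{n_1}\circ P_{n_2})=n_2+1$, where $P_n$ denotes the path on $n$ vertices.
   Context: For a graph $G$ and $S\subseteq V(G)$ with $|S|\ge 2$, an $S$-tree is a subgraph of $G$ that is a tree containing all vertices of $S$; $\lambda(S)$ is the maximum number of pairwise edge-disjoint $S$-trees in $G$, and $\lambda_3(G)=\min\{\lambda(S): S\subseteq V(G),\ |S|=3\}$. The lexicographic product $G\circ H$ has vertex set $V(G)\times V(H)$, and $(u,v)$ is adjacent to $(u',v')$ iff either $uu'\in E(G)$, or $u=u'$ and $vv'\in E(H)$. *)

theory Defs
  imports Main
begin

type_synonym 'a graph = "'a set \<times> 'a set set"

definition verts :: "'a graph \<Rightarrow> 'a set" where "verts G = fst G"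
definition edges :: "'a graph \<Rightarrow> 'a set set" where "edges G = snd G"

definition is_graph :: "'a graph \<Rightarrow> bool" where
  "is_graph G \<longleftrightarrow> finite (verts G) \<and>
     (\<forall>e\<in>edges G. e \<subseteq> verts G \<and> card e = 2)"

definition subgraph :: "'a graph \<Rightarrow> 'a graph \<Rightarrow> bool" where
  "subgraph H G \<longleftrightarrow> is_graph H \<and> verts H \<subseteq> verts G \<and> edges H \<subseteq> edges G"

definition adj_rel :: "'a graph \<Rightarrow> ('a \<times> 'a) set" where
  "adj_rel G = {(x, y). {x, y} \<in> edges G}"

definition connected_graph :: "'a graph \<Rightarrow> bool" where
  "connected_graph G \<longleftrightarrow> verts G \<noteq> {} \<and>
     (\<forall>x\<in>verts G. \<forall>y\<in>verts G. (x, y) \<in> (adj_rel G)\<^sup>*)"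

definition has_cycle :: "'a graph \<Rightarrow> bool" where
  "has_cycle G \<longleftrightarrow> (\<exists>xs. length xs \<ge> 3 \<and> distinct xs \<and> set xs \<subseteq> verts G \<and>
     (\<forall>i<length xs. {xs ! i, xs ! ((i + 1) mod length xs)} \<in> edges G))"

definition is_tree :: "'a graph \<Rightarrow> bool" where
  "is_tree T \<longleftrightarrow> connected_graph T \<and> \<not> has_cycle T"

definition S_tree :: "'a graph \<Rightarrow> 'a set \<Rightarrow> 'a graph \<Rightarrow> bool" where
  "S_tree G S T \<longleftrightarrow> subgraph T G \<and> is_tree T \<and> S \<subseteq> verts T"

definition lambda_S :: "'a graph \<Rightarrow> 'a set \<Rightarrow> nat" where
  "lambda_S G S = Sup {k. \<exists>T :: nat \<Rightarrow> 'a graph.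
      (\<forall>i<k. S_tree G S (T i)) \<and>
      (\<forall>i<k. \<forall>j<k. i \<noteq> j \<longrightarrow> edges (T i) \<inter> edges (T j) = {})}"

definition lambda3 :: "'a graph \<Rightarrow> nat" where
  "lambda3 G = Inf {lambda_S G S | S. S \<subseteq> verts G \<and> card S = 3}"

definition lex_prod :: "'a graph \<Rightarrow> 'b graph \<Rightarrow> ('a \<times> 'b) graph" where
  "lex_prod G H = (verts G \<times> verts H,
     {{(u, v), (u', v')} | u v u' v'.
        u \<in> verts G \<and> u' \<in> verts G \<and> v \<in> verts H \<and> v' \<in> verts H \<and>
        ({u, u'} \<in> edges G \<or> (u = u' \<and> {v, v'} \<in> edges H))})"

definition path_graph :: "nat \<Rightarrow> nat graph" where
  "path_graph n = ({0..<n}, {{i, i + 1} | i. i + 1 < n})"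

end

theory Submission
  imports Defs
begin


definition adj :: "'a set set \<Rightarrow> ('a \<times> 'a) set" where
  "adj F = {(x,y). {x,y} \<in> F}"

lemma adj_rel_eq: "adj_rel (V,D) = adj D"
  by (simp add: adj_rel_def adj_def edges_def)

lemma adj_sym: "(x,y) \<in> (adj F)\<^sup>* \<Longrightarrow> (y,x) \<in> (adj F)\<^sup>*"
proof (induction rule: rtrancl_induct)
  case base show ?case by simp
next
  case (step y z)
  have "(z,y) \<in> adj F" using step(2) by (auto simp: adj_def insert_commute)
  thus ?case using step(3) by (rule converse_rtrancl_into_rtrancl)
qed

lemma adj_edge: "{x,y} \<in> F \<Longrightarrow> (x,y) \<in> (adj F)\<^sup>*"
  by (auto simp: adj_def)

lemma adj_edge': "{x,y} \<in> F \<Longrightarrow> (y,x) \<in> (adj F)\<^sup>*"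
  by (auto simp: adj_def insert_commute)

lemma adj_mono: "F \<subseteq> F' \<Longrightarrow> (x,y) \<in> (adj F)\<^sup>* \<Longrightarrow> (x,y) \<in> (adj F')\<^sup>*"
proof -
  assume "F \<subseteq> F'" "(x,y) \<in> (adj F)\<^sup>*"
  moreover have "adj F \<subseteq> adj F'" using \<open>F \<subseteq> F'\<close> by (auto simp: adj_def)
  ultimately show ?thesis using rtrancl_mono by blast
qed

lemma cycle_detour:
  assumes L: "length xs \<ge> 3" and dist: "distinct xs"
    and cyc: "\<forall>i<length xs. {xs!i, xs!((i+1) mod length xs)} \<in> D"
  shows "(xs!1, xs!0) \<in> (adj (D - {{xs!0, xs!1}}))\<^sup>*"
proof -
  let ?L = "length xs" let ?e = "{xs!0, xs!1}" let ?D1 = "D - {?e}"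
  have nnl: "xs \<noteq> []" using L by auto
  have path: "1 \<le> j \<and> j < ?L \<longrightarrow> (xs!1, xs!j) \<in> (adj ?D1)\<^sup>*" for j
  proof (induction j)
    case 0 show ?case by simp
  next
    case (Suc j)
    show ?case
    proof (cases "j = 0")
      case True thus ?thesis by simp
    next
      case False
      { assume h: "Suc j < ?L"
        have "{xs!j, xs!((j+1) mod ?L)} \<in> D" using cyc[rule_format, of j] h by simp
        hence e1: "{xs!j, xs!(Suc j)} \<in> D" using h by simp
        have ne: "{xs!j, xs!(Suc j)} \<noteq> ?e"
        proof
          assume "{xs!j, xs!(Suc j)} = ?e"
          hence dj: "(xs!j = xs!0 \<and> xs!Suc j = xs!1) \<or> (xs!j = xs!1 \<and> xs!Suc j = xs!0)"
            by (simp add: doubleton_eq_iff)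
          have nn: "0 < length xs" "j < length xs" using h by auto
          moreover have "xs!j \<noteq> xs!0" using nth_eq_iff_index_eq[OF dist, of j 0] nn False by simp
          moreover have "xs!Suc j \<noteq> xs!0" using nth_eq_iff_index_eq[OF dist, of "Suc j" 0] h nn by simp
          ultimately show False using dj by blast
        qed
        have "(xs!j, xs!Suc j) \<in> adj ?D1" using e1 ne by (simp add: adj_def)
        moreover have "(xs!1, xs!j) \<in> (adj ?D1)\<^sup>*" using Suc.IH False h by simp
        ultimately have "(xs!1, xs!Suc j) \<in> (adj ?D1)\<^sup>*" by (rule rtrancl.rtrancl_into_rtrancl[rotated]) }
      thus ?thesis by blast
    qed
  qed
  have "1 \<le> ?L - 1 \<and> ?L - 1 < ?L" using L by linarith
  hence p1: "(xs!1, xs!(?L-1)) \<in> (adj ?D1)\<^sup>*" using path[of "?L - 1"] by blast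
  have ar0: "?L - 1 < ?L" using L by linarith
  have "{xs!(?L-1), xs!((?L - 1 + 1) mod ?L)} \<in> D" using cyc ar0 by blast
  moreover have "(?L - 1 + 1) mod ?L = 0"
  proof -
    have "?L - 1 + 1 = ?L" using L by linarith
    thus ?thesis by simp
  qed
  ultimately have e2: "{xs!(?L-1), xs!0} \<in> D" by simp
  have ne2: "{xs!(?L-1), xs!0} \<noteq> ?e"
  proof
    assume "{xs!(?L-1), xs!0} = ?e"
    hence dj2: "(xs!(?L-1) = xs!0) \<or> (xs!(?L-1) = xs!1)"
      by (simp add: doubleton_eq_iff) blast
    have ar: "?L - 1 < ?L" "0 < ?L" "1 < ?L" "?L - 1 \<noteq> 0" "?L - 1 \<noteq> 1" using L by linarith+
    have "xs!(?L-1) = xs!0 \<longleftrightarrow> ?L - 1 = 0" by (rule nth_eq_iff_index_eq[OF dist ar(1) ar(2)])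
    moreover have "xs!(?L-1) = xs!1 \<longleftrightarrow> ?L - 1 = 1" by (rule nth_eq_iff_index_eq[OF dist ar(1) ar(3)])
    ultimately show False using ar dj2 by blast
  qed
  have "(xs!(?L-1), xs!0) \<in> adj ?D1" using e2 ne2 by (simp add: adj_def)
  with p1 show ?thesis by (rule rtrancl.rtrancl_into_rtrancl)
qed

lemma spanning_tree:
  assumes fin: "finite V" and D: "\<forall>e\<in>D. e \<subseteq> V \<and> card e = 2" and ne: "V \<noteq> {}"
    and conn: "\<forall>x\<in>V. \<forall>y\<in>V. (x,y) \<in> (adj D)\<^sup>*"
  shows "\<exists>D'\<subseteq>D. is_tree (V, D')"
proof -
  define P where "P D' \<longleftrightarrow> D' \<subseteq> D \<and> (\<forall>x\<in>V. \<forall>y\<in>V. (x,y) \<in> (adj D')\<^sup>*)" for D'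
  have "P D" using conn by (simp add: P_def)
  then obtain D0 where P0: "P D0" and min: "\<forall>D'. P D' \<longrightarrow> card D0 \<le> card D'"
    using ex_has_least_nat[of P D card] by blast
  have finD: "finite D"
  proof (rule finite_subset)
    show "D \<subseteq> Pow V" using D by auto
    show "finite (Pow V)" using fin by simp
  qed
  have finD0: "finite D0" using P0 finD unfolding P_def using finite_subset by blast
  have nc: "\<not> has_cycle (V, D0)"
  proof
    assume "has_cycle (V,D0)"
    then obtain xs where xs: "length xs \<ge> 3" "distinct xs"
      "\<forall>i<length xs. {xs!i, xs!((i+1) mod length xs)} \<in> D0"
      by (auto simp: has_cycle_def edges_def verts_def)
    let ?e = "{xs!0, xs!1}"
    have L1: "0 < length xs" "1 < length xs" using xs(1) by auto
    have "{xs!0, xs!((0+1) mod length xs)} \<in> D0" using xs(3) L1 by blast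
    moreover have "(0+1) mod length xs = 1" using L1 by simp
    ultimately have eD0: "?e \<in> D0" by simp
    define D1 where "D1 = D0 - {?e}"
    have det: "(xs!1, xs!0) \<in> (adj D1)\<^sup>*" using cycle_detour[OF xs(1,2,3)] D1_def by simp
    have sub: "adj D0 \<subseteq> (adj D1)\<^sup>*"
    proof
      fix p assume "p \<in> adj D0"
      then obtain x y where p: "p = (x,y)" "{x,y} \<in> D0" by (auto simp: adj_def)
      show "p \<in> (adj D1)\<^sup>*"
      proof (cases "{x,y} = ?e")
        case False then show ?thesis using p by (auto simp: adj_def D1_def)
      next
        case True
        then have "(x = xs!0 \<and> y = xs!1) \<or> (x = xs!1 \<and> y = xs!0)" by (auto simp: doubleton_eq_iff)
        then show ?thesis using det adj_sym[OF det] p by auto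
      qed
    qed
    have "(adj D0)\<^sup>* \<subseteq> (adj D1)\<^sup>*" using sub by (rule rtrancl_subset_rtrancl)
    hence PD1: "P D1" using P0 unfolding P_def D1_def by blast
    have cl: "card D1 < card D0" unfolding D1_def by (rule card_Diff1_less[OF finD0 eD0])
    show False using min[rule_format, OF PD1] cl by linarith
  qed
  have "is_tree (V, D0)" using nc P0 ne
    by (auto simp: is_tree_def connected_graph_def adj_rel_eq verts_def P_def)
  thus ?thesis using P0 P_def by blast
qed

lemma steiner:
  assumes G: "is_graph G" and F: "F \<subseteq> edges G" and S: "S \<subseteq> verts G" and r: "r \<in> S"
    and reach: "\<forall>x\<in>S. (r,x) \<in> (adj F)\<^sup>*"
  shows "\<exists>T. S_tree G S T \<and> edges T \<subseteq> F"
proof -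
  define C where "C = {y. (r,y) \<in> (adj F)\<^sup>*}"
  define D where "D = {e\<in>F. e \<subseteq> C}"
  have Cv: "C \<subseteq> verts G"
  proof
    fix y assume "y \<in> C"
    hence "(r,y) \<in> (adj F)\<^sup>*" by (simp add: C_def)
    thus "y \<in> verts G"
    proof (induction rule: rtrancl_induct)
      case base then show ?case using S r by auto
    next
      case (step y z)
      then have "{y,z} \<in> edges G" using F by (auto simp: adj_def)
      then show ?case using G by (auto simp: is_graph_def)
    qed
  qed
  have finC: "finite C" using Cv G finite_subset by (auto simp: is_graph_def)
  have De: "\<forall>e\<in>D. e \<subseteq> C \<and> card e = 2" using F G by (auto simp: D_def is_graph_def)
  have rC: "r \<in> C" by (simp add: C_def)
  have rD: "(r,y) \<in> (adj F)\<^sup>* \<Longrightarrow> (r,y) \<in> (adj D)\<^sup>*" for y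
  proof (induction rule: rtrancl_induct)
    case base then show ?case by simp
  next
    case (step y z)
    have "y \<in> C" "z \<in> C" using step(1,2) by (auto simp: C_def)
    hence "{y,z} \<in> D" using step(2) by (auto simp: D_def adj_def)
    then show ?case using step(3) by (meson adj_edge rtrancl_trans)
  qed
  have conn: "\<forall>x\<in>C. \<forall>y\<in>C. (x,y) \<in> (adj D)\<^sup>*"
  proof (intro ballI)
    fix x y assume "x \<in> C" "y \<in> C"
    hence "(r,x) \<in> (adj D)\<^sup>*" "(r,y) \<in> (adj D)\<^sup>*" using rD by (auto simp: C_def)
    thus "(x,y) \<in> (adj D)\<^sup>*" by (meson adj_sym rtrancl_trans)
  qed
  obtain D' where D': "D' \<subseteq> D" "is_tree (C, D')"
    using spanning_tree[OF finC De _ conn] rC by blast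
  have "S \<subseteq> C" using reach by (auto simp: C_def)
  moreover have "subgraph (C,D') G"
  proof -
    have "is_graph (C,D')" using D'(1) De finC unfolding is_graph_def verts_def edges_def by auto
    moreover have "D' \<subseteq> edges G" using D'(1) F unfolding D_def by blast
    ultimately show ?thesis using Cv unfolding subgraph_def verts_def edges_def by simp
  qed
  ultimately have st: "S_tree G S (C,D')" using D' by (simp add: S_tree_def verts_def)
  have ef: "edges (C,D') \<subseteq> F" using D'(1) unfolding edges_def D_def by auto
  show ?thesis using st ef by (rule_tac x="(C,D')" in exI) simp
qed



abbreviation LG :: "nat \<Rightarrow> nat \<Rightarrow> (nat \<times> nat) graph" where
  "LG n m \<equiv> lex_prod (path_graph n) (path_graph m)"

lemma verts_LG: "verts (LG n m) = {0..<n} \<times> {0..<m}"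
  by (simp add: lex_prod_def path_graph_def verts_def)

lemma edges_LG: "edges (LG n m) = {{(u,v),(u',v')} | u v u' v'. u<n \<and> u'<n \<and> v<m \<and> v'<m \<and>
   ({u,u'} \<in> {{i,i+1}|i. i+1<n} \<or> (u=u' \<and> {v,v'} \<in> {{i,i+1}|i. i+1<m}))}"
  by (simp add: lex_prod_def path_graph_def verts_def edges_def)

lemma cross_edge: "l+1<n \<Longrightarrow> p<m \<Longrightarrow> q<m \<Longrightarrow> {(l,p),(l+1,q)} \<in> edges (LG n m)"
  unfolding edges_LG by fastforce

lemma cross_edge': "l+1<n \<Longrightarrow> p<m \<Longrightarrow> q<m \<Longrightarrow> {(l+1,q),(l,p)} \<in> edges (LG n m)"
  by (subst insert_commute) (rule cross_edge)

lemma within_edge: "l<n \<Longrightarrow> p+1<m \<Longrightarrow> {(l,p),(l,p+1)} \<in> edges (LG n m)"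
  unfolding edges_LG by fastforce

lemma edges_LG_sub: assumes "e \<in> edges (LG n m)" shows "e \<subseteq> {0..<n} \<times> {0..<m}"
proof -
  obtain u v u' v' where "e = {(u,v),(u',v')}" "u<n" "u'<n" "v<m" "v'<m"
    using assms unfolding edges_LG by blast
  then show ?thesis by simp
qed

lemma pe_ne:
  assumes "{x,y} \<in> {{i,i+1}|i::nat. i+1<k}" shows "x \<noteq> y"
proof
  assume xy: "x = y"
  from assms obtain i where i: "{x,y} = {i,i+1}" by blast
  have "i \<in> {x,y}" "i+1 \<in> {x,y}" unfolding i by auto
  with xy show False by auto
qed

lemma is_graph_LG: "is_graph (LG n m)"
proof -
  have A: "card e = 2" if he: "e \<in> edges (LG n m)" for e
  proof -
    obtain u v u' v' where e: "e = {(u,v),(u',v')}" and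
      c: "{u,u'} \<in> {{i,i+1}|i. i+1<n} \<or> (u=u' \<and> {v,v'} \<in> {{i,i+1}|i. i+1<m})"
    proof -
      from he have "\<exists>u v u' v'. e = {(u,v),(u',v')} \<and> u<n \<and> u'<n \<and> v<m \<and> v'<m \<and>
        ({u,u'} \<in> {{i,i+1}|i. i+1<n} \<or> (u=u' \<and> {v,v'} \<in> {{i,i+1}|i. i+1<m}))"
        unfolding edges_LG by (simp only: mem_Collect_eq)
      then show ?thesis by (elim exE conjE) (rule that; assumption)
    qed
    have "u \<noteq> u' \<or> v \<noteq> v'"
    proof (cases "{u,u'} \<in> {{i,i+1}|i. i+1<n}")
      case True then have "u \<noteq> u'" by (rule pe_ne)
      then show ?thesis ..
    next
      case False with c have "{v,v'} \<in> {{i,i+1}|i. i+1<m}" by blast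
      then have "v \<noteq> v'" by (rule pe_ne)
      then show ?thesis ..
    qed
    then have "(u,v) \<noteq> (u',v')" by simp
    then show ?thesis using e by simp
  qed
  have B: "finite (verts (LG n m))" by (simp add: verts_LG)
  have C: "e \<subseteq> verts (LG n m)" if "e \<in> edges (LG n m)" for e
    using edges_LG_sub[OF that] verts_LG by simp
  show ?thesis unfolding is_graph_def
  proof (intro conjI ballI)
    show "finite (verts (LG n m))" by (rule B)
  next
    fix e assume "e \<in> edges (LG n m)"
    then show "e \<subseteq> verts (LG n m)" "card e = 2" by (rule C, rule A)
  qed
qed

lemma finite_edges_LG: "finite (edges (LG n m))"
proof (rule finite_subset)
  show "edges (LG n m) \<subseteq> Pow ({0..<n} \<times> {0..<m})" using edges_LG_sub by blast
qed simp

definition good :: "nat \<Rightarrow> nat \<Rightarrow> (nat \<times> nat) set \<Rightarrow> bool" where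
  "good n m S \<longleftrightarrow> (\<exists>F. (\<forall>k\<le>m. F k \<subseteq> edges (LG n m) \<and> (\<exists>r\<in>S. \<forall>x\<in>S. (r,x) \<in> (adj (F k))\<^sup>*))
      \<and> (\<forall>i\<le>m. \<forall>j\<le>m. i \<noteq> j \<longrightarrow> F i \<inter> F j = {}))"

definition TS :: "'a graph \<Rightarrow> 'a set \<Rightarrow> nat set" where
  "TS G S = {k. \<exists>T :: nat \<Rightarrow> 'a graph.
      (\<forall>i<k. S_tree G S (T i)) \<and>
      (\<forall>i<k. \<forall>j<k. i \<noteq> j \<longrightarrow> edges (T i) \<inter> edges (T j) = {})}"

lemma lambda_S_TS: "lambda_S G S = Sup (TS G S)"
  by (simp add: lambda_S_def TS_def)

lemma good_TS:
  assumes g: "good n m S" and S: "S \<subseteq> verts (LG n m)"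
  shows "m+1 \<in> TS (LG n m) S"
proof -
  obtain F where F: "\<forall>k\<le>m. F k \<subseteq> edges (LG n m) \<and> (\<exists>r\<in>S. \<forall>x\<in>S. (r,x) \<in> (adj (F k))\<^sup>*)"
    and dis: "\<forall>i\<le>m. \<forall>j\<le>m. i \<noteq> j \<longrightarrow> F i \<inter> F j = {}"
    using g unfolding good_def by blast
  have "\<forall>k. \<exists>T. k \<le> m \<longrightarrow> S_tree (LG n m) S T \<and> edges T \<subseteq> F k"
  proof
    fix k show "\<exists>T. k \<le> m \<longrightarrow> S_tree (LG n m) S T \<and> edges T \<subseteq> F k"
    proof (cases "k \<le> m")
      case True
      then obtain r where r: "r \<in> S" "\<forall>x\<in>S. (r,x) \<in> (adj (F k))\<^sup>*" using F by blast
      have "F k \<subseteq> edges (LG n m)" using F True by blast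
      from steiner[OF is_graph_LG this S r] show ?thesis by blast
    qed simp
  qed
  then obtain T where T: "\<forall>k. k \<le> m \<longrightarrow> S_tree (LG n m) S (T k) \<and> edges (T k) \<subseteq> F k"
    by metis
  have "(\<forall>i<m+1. S_tree (LG n m) S (T i)) \<and>
      (\<forall>i<m+1. \<forall>j<m+1. i \<noteq> j \<longrightarrow> edges (T i) \<inter> edges (T j) = {})"
  proof (intro conjI allI impI)
    fix i assume "i < m+1" then show "S_tree (LG n m) S (T i)" using T by auto
  next
    fix i j assume ij: "i < m+1" "j < m+1" "i \<noteq> j"
    have "edges (T i) \<subseteq> F i" "edges (T j) \<subseteq> F j" using T ij by auto
    moreover have "F i \<inter> F j = {}" using dis ij by auto
    ultimately show "edges (T i) \<inter> edges (T j) = {}" by blast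
  qed
  then show ?thesis unfolding TS_def by blast
qed

lemma tree_edge_at:
  assumes "S_tree G S T" "v \<in> S" "w \<in> S" "v \<noteq> w"
  shows "\<exists>e\<in>edges T. v \<in> e"
proof -
  have "(v,w) \<in> (adj_rel T)\<^sup>*" using assms unfolding S_tree_def is_tree_def connected_graph_def by blast
  then obtain y where "(v,y) \<in> adj_rel T" using assms(4) by (metis converse_rtranclE)
  then show ?thesis by (auto simp: adj_rel_def)
qed

lemma TS_bound:
  assumes fin: "finite (edges G)" and vw: "v \<in> S" "w \<in> S" "v \<noteq> w" and k: "k \<in> TS G S"
  shows "k \<le> card {e\<in>edges G. v \<in> e}"
proof -
  obtain T where T: "\<forall>i<k. S_tree G S (T i)"
      "\<forall>i<k. \<forall>j<k. i \<noteq> j \<longrightarrow> edges (T i) \<inter> edges (T j) = {}"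
    using k unfolding TS_def by blast
  define f where "f i = (SOME e. e \<in> edges (T i) \<and> v \<in> e)" for i
  have f: "f i \<in> edges (T i) \<and> v \<in> f i" if "i < k" for i
  proof -
    have "\<exists>e. e \<in> edges (T i) \<and> v \<in> e" using tree_edge_at[OF _ vw] T(1) that by blast
    then show ?thesis unfolding f_def by (rule someI_ex)
  qed
  have inj: "inj_on f {..<k}"
  proof (rule inj_onI)
    fix i j assume ij: "i \<in> {..<k}" "j \<in> {..<k}" "f i = f j"
    show "i = j"
    proof (rule ccontr)
      assume "i \<noteq> j"
      then have "edges (T i) \<inter> edges (T j) = {}" using T(2) ij by auto
      then show False using f[of i] f[of j] ij by auto
    qed
  qed
  have sub: "f ` {..<k} \<subseteq> {e\<in>edges G. v \<in> e}"
  proof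
    fix e assume "e \<in> f ` {..<k}"
    then obtain i where i: "i < k" "e = f i" by auto
    have "edges (T i) \<subseteq> edges G" using T(1) i unfolding S_tree_def subgraph_def by blast
    then show "e \<in> {e\<in>edges G. v \<in> e}" using f[OF i(1)] i by auto
  qed
  have "card {..<k} \<le> card {e\<in>edges G. v \<in> e}"
    using card_inj_on_le[OF inj sub] fin by auto
  then show ?thesis by simp
qed

lemma lambda_ge:
  assumes g: "good n m S" and S: "S \<subseteq> verts (LG n m)" and vw: "v \<in> S" "w \<in> S" "v \<noteq> w"
  shows "m+1 \<le> lambda_S (LG n m) S"
proof -
  have "bdd_above (TS (LG n m) S)"
    using TS_bound[OF finite_edges_LG vw] by (meson bdd_above.I)
  then show ?thesis unfolding lambda_S_TS using good_TS[OF g S] by (rule cSup_upper[rotated])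
qed



definition sw :: "nat \<Rightarrow> nat \<Rightarrow> nat" where
  "sw u k = (if k = 0 then u else if k = u then 0 else k)"

lemma sw_sw[simp]: "sw u (sw u k) = k" by (simp add: sw_def)
lemma sw_0[simp]: "sw u 0 = u" by (simp add: sw_def)
lemma sw_inj[simp]: "sw u a = sw u b \<longleftrightarrow> a = b" by (metis sw_sw)
lemma sw_eq_self[simp]: "sw x k = x \<longleftrightarrow> k = 0" by (auto simp add: sw_def)
lemma sw_eq_self'[simp]: "x = sw x k \<longleftrightarrow> k = 0" by (auto simp add: sw_def)
lemma sw_lt: "u < m \<Longrightarrow> k < m \<Longrightarrow> sw u k < m" by (simp add: sw_def)

lemma cross_eq:
  assumes "{(l,p),(Suc l,q)} = {(l',p'),(Suc l',q')}"
  shows "l = l' \<and> p = p' \<and> q = q'"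
proof -
  from assms have "((l,p) = (l',p') \<and> (Suc l,q) = (Suc l',q')) \<or> ((l,p) = (Suc l',q') \<and> (Suc l,q) = (l',p'))"
    by (rule doubleton_eq_iff[THEN iffD1])
  then show ?thesis by auto
qed

lemma cross_ne_within: "{(l,p),(Suc l,q)} \<noteq> {(l',p'),(l',p'')}"
proof
  assume "{(l,p),(Suc l,q)} = {(l',p'),(l',p'')}"
  then have "((l,p) = (l',p') \<and> (Suc l,q) = (l',p'')) \<or> ((l,p) = (l',p'') \<and> (Suc l,q) = (l',p'))"
    by (rule doubleton_eq_iff[THEN iffD1])
  then show False by auto
qed

lemma reach_trans: "(x,y) \<in> R\<^sup>* \<Longrightarrow> (y,z) \<in> R\<^sup>* \<Longrightarrow> (x,z) \<in> R\<^sup>*"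
  by (rule rtrancl_trans)

lemma root_lemma:
  assumes "S \<noteq> {}" "\<forall>x\<in>S. (z,x) \<in> (adj F)\<^sup>*"
  shows "\<exists>r\<in>S. \<forall>x\<in>S. (r,x) \<in> (adj F)\<^sup>*"
proof -
  obtain r where r: "r \<in> S" using assms(1) by blast
  have rz: "(r,z) \<in> (adj F)\<^sup>*" using adj_sym[OF assms(2)[rule_format, OF r]] .
  show ?thesis
  proof (intro bexI[of _ r] ballI)
    fix x assume "x \<in> S"
    show "(r,x) \<in> (adj F)\<^sup>*" using rtrancl_trans[OF rz assms(2)[rule_format, OF \<open>x \<in> S\<close>]] .
  qed (rule r)
qed

locale fw =
  fixes n m :: nat and u :: "nat \<Rightarrow> nat" and a \<kappa> s1 s2 :: nat
  assumes n: "n \<ge> 3" and m: "m \<ge> 3" and u: "\<And>l. u l < m"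
    and \<kappa>: "0 < \<kappa>" "\<kappa> < m" and s1: "0 < s1" "s1 < m" and s2: "0 < s2" "s2 < m"
    and s1\<kappa>: "s1 \<noteq> \<kappa>" and s21: "s2 \<noteq> s1"
begin

definition cls :: "nat \<Rightarrow> nat \<Rightarrow> nat \<Rightarrow> nat" where
  "cls l p q = (if p = sw (u l) s1 \<and> q = sw (u (Suc l)) s2 then m
     else if q = u (Suc l) then (if l = a \<and> p = sw (u a) \<kappa> then 0 else sw (u l) p)
     else sw (u (Suc l)) q)"

definition W :: "(nat \<times> nat) set set" where
  "W = {{(l,p),(l,Suc p)} | l p. l<n \<and> Suc p<m}"

definition F :: "nat \<Rightarrow> (nat \<times> nat) set set" where
  "F k = {{(l,p),(Suc l,q)} | l p q. Suc l<n \<and> p<m \<and> q<m \<and> cls l p q = k}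
     \<union> (if k = m then W else {})"

lemma F_cross: "Suc l < n \<Longrightarrow> p < m \<Longrightarrow> q < m \<Longrightarrow> cls l p q = k \<Longrightarrow> {(l,p),(Suc l,q)} \<in> F k"
  unfolding F_def by blast

lemma F_W: "l < n \<Longrightarrow> Suc p < m \<Longrightarrow> {(l,p),(l,Suc p)} \<in> F m"
  unfolding F_def W_def by (simp; blast)

lemma F_sub: "F k \<subseteq> edges (LG n m)"
proof
  fix e assume "e \<in> F k"
  then consider (c) l p q where "e = {(l,p),(Suc l,q)}" "Suc l<n" "p<m" "q<m"
    | (w) l p where "e = {(l,p),(l,Suc p)}" "l<n" "Suc p<m"
    unfolding F_def W_def by (auto split: if_splits)
  then show "e \<in> edges (LG n m)"
  proof cases
    case c then show ?thesis using cross_edge[of l n p m q] by simp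
  next
    case w then show ?thesis using within_edge[of l n p m] by simp
  qed
qed

lemma F_cases: "e \<in> F k \<Longrightarrow> (\<exists>l p q. e = {(l,p),(Suc l,q)} \<and> cls l p q = k) \<or> (k = m \<and> (\<exists>l p. e = {(l,p),(l,Suc p)}))"
  unfolding F_def W_def by (auto split: if_splits)

lemma F_disj: "i \<noteq> j \<Longrightarrow> F i \<inter> F j = {}"
proof (rule ccontr)
  assume ij: "i \<noteq> j" and "F i \<inter> F j \<noteq> {}"
  then obtain e where ei: "e \<in> F i" and ej: "e \<in> F j" by blast
  show False
  proof (cases "\<exists>l p. e = {(l,p),(l,Suc p)}")
    case True
    then obtain l0 p0 where w: "e = {(l0,p0),(l0,Suc p0)}" by blast
    have nc: "\<forall>l p q. e \<noteq> {(l,p),(Suc l,q)}"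
    proof (intro allI)
      fix l p q show "e \<noteq> {(l,p),(Suc l,q)}" using cross_ne_within[of l p q l0 p0 "Suc p0"] w by metis
    qed
    have "i = m" using F_cases[OF ei] nc by blast
    moreover have "j = m" using F_cases[OF ej] nc by blast
    ultimately show False using ij by simp
  next
    case False
    then obtain l p q where c1: "e = {(l,p),(Suc l,q)}" "cls l p q = i" using F_cases[OF ei] by blast
    obtain l' p' q' where c2: "e = {(l',p'),(Suc l',q')}" "cls l' p' q' = j" using F_cases[OF ej] False by blast
    have "l = l' \<and> p = p' \<and> q = q'" using c1(1) c2(1) cross_eq by metis
    then show False using c1 c2 ij by simp
  qed
qed

lemma sw_self[simp]: "sw x x = 0" by (simp add: sw_def)

lemma cls_backbone: "cls l (sw (u l) k) (sw (u (Suc l)) k) = k"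
proof (cases "k = 0")
  case True
  have A: "\<not> (l = a \<and> u l = sw (u a) \<kappa>)" using \<kappa> by auto
  have B: "u l \<noteq> sw (u l) s1" using s1 by simp
  show ?thesis using True A B unfolding cls_def by simp
next
  case False
  show ?thesis using False s21 unfolding cls_def by simp
qed

lemma backbone:
  assumes k: "k < m" shows "l < n \<Longrightarrow> ((0, sw (u 0) k), (l, sw (u l) k)) \<in> (adj (F k))\<^sup>*"
proof (induction l)
  case 0 show ?case by simp
next
  case (Suc l)
  have "{(l, sw (u l) k), (Suc l, sw (u (Suc l)) k)} \<in> F k"
    using F_cross[OF Suc.prems sw_lt[OF u k] sw_lt[OF u k] cls_backbone[of l k]] .
  then show ?case using Suc by (meson adj_edge Suc_lessD rtrancl_trans)
qed

lemma cls_attach_up: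
  assumes "k \<noteq> 0" "p = u l \<or> (l = a \<and> p = sw (u a) \<kappa>)"
  shows "cls l p (sw (u (Suc l)) k) = k"
proof -
  have "p \<noteq> sw (u l) s1" using assms(2) s1 s1\<kappa> by auto
  moreover have "sw (u (Suc l)) k \<noteq> u (Suc l)" using assms(1) by simp
  ultimately show ?thesis unfolding cls_def by simp
qed

lemma cls_attach_top:
  assumes "\<not> (l = a \<and> sw (u l) k = sw (u a) \<kappa>)"
  shows "cls l (sw (u l) k) (u (Suc l)) = k"
proof -
  have "u (Suc l) \<noteq> sw (u (Suc l)) s2" using s2 by simp
  then show ?thesis using assms unfolding cls_def by auto
qed

lemma cls_x0: "cls a (sw (u a) \<kappa>) (u (Suc a)) = 0"
proof -
  have "sw (u a) \<kappa> \<noteq> sw (u a) s1" using s1\<kappa> by simp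
  then show ?thesis unfolding cls_def by simp
qed

lemma cls_steal: "cls l (sw (u l) s1) (sw (u (Suc l)) s2) = m"
  unfolding cls_def by simp

lemma within_reach: "l < n \<Longrightarrow> p < m \<Longrightarrow> ((l,0),(l,p)) \<in> (adj (F m))\<^sup>*"
proof (induction p)
  case 0 show ?case by simp
next
  case (Suc p)
  have "{(l,p),(l,Suc p)} \<in> F m" using F_W Suc.prems by blast
  then show ?case using Suc by (meson adj_edge Suc_lessD rtrancl_trans)
qed

lemma layer_reach: "l < n \<Longrightarrow> ((0,0),(l,0)) \<in> (adj (F m))\<^sup>*"
proof (induction l)
  case 0 show ?case by simp
next
  case (Suc l)
  have l: "l < n" using Suc.prems by simp
  have A: "((l,0),(l, sw (u l) s1)) \<in> (adj (F m))\<^sup>*"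
    using within_reach[OF l sw_lt[OF u s1(2)]] .
  have B: "{(l, sw (u l) s1),(Suc l, sw (u (Suc l)) s2)} \<in> F m"
    using F_cross[OF Suc.prems sw_lt[OF u s1(2)] sw_lt[OF u s2(2)] cls_steal] .
  have C: "((Suc l, sw (u (Suc l)) s2), (Suc l, 0)) \<in> (adj (F m))\<^sup>*"
    using adj_sym[OF within_reach[OF Suc.prems sw_lt[OF u s2(2)]]] .
  show ?case using Suc.IH[OF l] A adj_edge[OF B] C by (meson rtrancl_trans)
qed

lemma all_reach_m: "l < n \<Longrightarrow> p < m \<Longrightarrow> ((0,0),(l,p)) \<in> (adj (F m))\<^sup>*"
  using layer_reach within_reach rtrancl_trans by metis

theorem good_fw:
  assumes Sne: "S \<noteq> {}"
    and S: "\<forall>v\<in>S. (\<exists>l. l<n \<and> v = (l, u l) \<and> (Suc l = n \<longrightarrow> a+2 \<noteq> n)) \<or>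
                  (v = (a, sw (u a) \<kappa>) \<and> Suc a < n)"
  shows "good n m S"
  unfolding good_def
proof (intro exI[of _ F] conjI)
  show "\<forall>i\<le>m. \<forall>j\<le>m. i \<noteq> j \<longrightarrow> F i \<inter> F j = {}" using F_disj by blast
  show "\<forall>k\<le>m. F k \<subseteq> edges (LG n m) \<and> (\<exists>r\<in>S. \<forall>x\<in>S. (r,x) \<in> (adj (F k))\<^sup>*)"
  proof (intro allI impI conjI)
  fix k assume k: "k \<le> m"
  show "F k \<subseteq> edges (LG n m)" by (rule F_sub)
  have "\<forall>x\<in>S. (z,x) \<in> (adj (F k))\<^sup>*" if z: "z = (if k = m then (0,0) else (0, sw (u 0) k))" for z
  proof
    fix v assume v: "v \<in> S"
    show "(z,v) \<in> (adj (F k))\<^sup>*"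
    proof (cases "k = m")
      case True
      from S v obtain l p where "v = (l,p)" "l < n" "p < m"
        using u sw_lt[OF u \<kappa>(2)] by fastforce
      then show ?thesis using all_reach_m z True by simp
    next
      case False
      hence km: "k < m" using k by simp
      have zb: "z = (0, sw (u 0) k)" using z False by simp
      show ?thesis
      proof (cases "k = 0")
        case k0: True
        from S v consider (h) l where "l<n" "v = (l, u l)" | (x) "v = (a, sw (u a) \<kappa>)" "Suc a < n"
          by blast
        then show ?thesis
        proof cases
          case h then show ?thesis using backbone[OF km h(1)] zb k0 by simp
        next
          case x
          have "{(a, sw (u a) \<kappa>), (Suc a, u (Suc a))} \<in> F 0"
            using F_cross[OF x(2) sw_lt[OF u \<kappa>(2)] u cls_x0] .
          moreover have "(z, (Suc a, u (Suc a))) \<in> (adj (F k))\<^sup>*"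
            using backbone[OF km x(2)] zb k0 by simp
          ultimately show ?thesis using x k0 by (meson adj_edge' rtrancl_trans)
        qed
      next
        case kn0: False
        from S v consider (h) l where "Suc l<n" "v = (l, u l)"
          | (t) l where "Suc l = n" "v = (l, u l)" "a+2 \<noteq> n"
          | (x) "v = (a, sw (u a) \<kappa>)" "Suc a < n"
          by (metis Suc_lessI)
        then show ?thesis
        proof cases
          case h
          have "{(l, u l), (Suc l, sw (u (Suc l)) k)} \<in> F k"
            using F_cross[OF h(1) u sw_lt[OF u km] cls_attach_up[OF kn0]] by simp
          moreover have "(z, (Suc l, sw (u (Suc l)) k)) \<in> (adj (F k))\<^sup>*"
            using backbone[OF km h(1)] zb by simp
          ultimately show ?thesis using h by (meson adj_edge' rtrancl_trans)
        next
          case x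
          have "{(a, sw (u a) \<kappa>), (Suc a, sw (u (Suc a)) k)} \<in> F k"
            using F_cross[OF x(2) sw_lt[OF u \<kappa>(2)] sw_lt[OF u km] cls_attach_up[OF kn0]] by simp
          moreover have "(z, (Suc a, sw (u (Suc a)) k)) \<in> (adj (F k))\<^sup>*"
            using backbone[OF km x(2)] zb by simp
          ultimately show ?thesis using x by (meson adj_edge' rtrancl_trans)
        next
          case t
          obtain l' where l': "l = Suc l'" using t n by (cases l) auto
          have nt: "\<not> (l' = a \<and> sw (u l') k = sw (u a) \<kappa>)" using t l' by auto
          have "{(l', sw (u l') k), (Suc l', u (Suc l'))} \<in> F k"
            using F_cross[OF _ sw_lt[OF u km] u cls_attach_top[OF nt]] t l' by simp
          moreover have "(z, (l', sw (u l') k)) \<in> (adj (F k))\<^sup>*"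
            using backbone[OF km] zb t l' by simp
          ultimately show ?thesis using t l' by (meson adj_edge rtrancl_trans)
        qed
      qed
    qed
  qed
  from this[OF refl] show "\<exists>r\<in>S. \<forall>x\<in>S. (r,x) \<in> (adj (F k))\<^sup>*" by (rule root_lemma[OF Sne])
  qed
qed

end



lemma edge_cases:
  assumes he: "e \<in> edges (LG n m)"
  shows "(\<exists>l p q. Suc l < n \<and> p < m \<and> q < m \<and> e = {(l,p),(Suc l,q)}) \<or>
         (\<exists>l p. l < n \<and> Suc p < m \<and> e = {(l,p),(l,Suc p)})"
proof -
  obtain u v u' v' where e: "e = {(u,v),(u',v')}" and b: "u<n" "u'<n" "v<m" "v'<m" and
      c: "{u,u'} \<in> {{i,i+1}|i. i+1<n} \<or> (u=u' \<and> {v,v'} \<in> {{i,i+1}|i. i+1<m})"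
  proof -
    from he have "\<exists>u v u' v'. e = {(u,v),(u',v')} \<and> u<n \<and> u'<n \<and> v<m \<and> v'<m \<and>
      ({u,u'} \<in> {{i,i+1}|i. i+1<n} \<or> (u=u' \<and> {v,v'} \<in> {{i,i+1}|i. i+1<m}))"
      unfolding edges_LG by (simp only: mem_Collect_eq)
    then show ?thesis by (elim exE conjE) (rule that; assumption)
  qed
  show ?thesis
  proof (cases "{u,u'} \<in> {{i,i+1}|i. i+1<n}")
    case True
    then obtain i where i: "{u,u'} = {i,i+1}" "i+1<n" by blast
    from i(1) have "(u = i \<and> u' = i+1) \<or> (u = i+1 \<and> u' = i)" by (rule doubleton_eq_iff[THEN iffD1])
    then show ?thesis
    proof
      assume "u = i \<and> u' = i+1"
      then have "e = {(i,v),(Suc i,v')}" using e by simp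
      then show ?thesis using i(2) b by (intro disjI1 exI[of _ i] exI[of _ v] exI[of _ v']) simp
    next
      assume "u = i+1 \<and> u' = i"
      then have "e = {(i,v'),(Suc i,v)}" using e by (simp add: insert_commute)
      then show ?thesis using i(2) b by (intro disjI1 exI[of _ i] exI[of _ v'] exI[of _ v]) simp
    qed
  next
    case False
    with c have uu: "u = u'" and "{v,v'} \<in> {{i,i+1}|i. i+1<m}" by blast+
    then obtain i where i: "{v,v'} = {i,i+1}" "i+1<m" by blast
    from i(1) have "(v = i \<and> v' = i+1) \<or> (v = i+1 \<and> v' = i)" by (rule doubleton_eq_iff[THEN iffD1])
    then show ?thesis
    proof
      assume "v = i \<and> v' = i+1"
      then have "e = {(u,i),(u,Suc i)}" using e uu by simp
      then show ?thesis using i(2) b by (intro disjI2 exI[of _ u] exI[of _ i]) simp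
    next
      assume "v = i+1 \<and> v' = i"
      then have "e = {(u,i),(u,Suc i)}" using e uu by (simp add: insert_commute)
      then show ?thesis using i(2) b by (intro disjI2 exI[of _ u] exI[of _ i]) simp
    qed
  qed
qed

lemma within_gen:
  assumes E: "\<And>p. Suc p < m \<Longrightarrow> {(a,p),(a,Suc p)} \<in> E"
  shows "p < m \<Longrightarrow> ((a,0),(a,p)) \<in> (adj E)\<^sup>*"
proof (induction p)
  case 0 show ?case by simp
next
  case (Suc p)
  have "{(a,p),(a,Suc p)} \<in> E" using E Suc.prems by blast
  then show ?case using Suc by (meson adj_edge Suc_lessD rtrancl_trans)
qed

lemma good_A:
  assumes n: "n \<ge> 3" and a: "a < n" and c: "c1 < m" "c2 < m" "c3 < m"
  shows "good n m {(a,c1),(a,c2),(a,c3)}"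
proof -
  define b where "b = (if Suc a < n then Suc a else a - 1)"
  have ab: "a \<noteq> b" using n a unfolding b_def by auto
  have star: "{(a,p),(b,k)} \<in> edges (LG n m)" if "p < m" "k < m" for p k
  proof (cases "Suc a < n")
    case True then show ?thesis using cross_edge[OF _ that] unfolding b_def by simp
  next
    case False
    then have a': "a = Suc (a - 1)" "Suc (a - 1) < n" using a n by auto
    have "{(a - 1 + 1,p),(a-1,k)} \<in> edges (LG n m)" using a'(2) that by (intro cross_edge') simp_all
    then show ?thesis using False a' unfolding b_def by simp
  qed
  define F where "F k = (if k < m then {{(a,p),(b,k)} | p. p<m} else {{(a,p),(a,Suc p)} | p. Suc p<m})" for k
  show ?thesis unfolding good_def
  proof (intro exI[of _ F] conjI allI impI)
    fix k assume k: "k \<le> m"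
    show "F k \<subseteq> edges (LG n m)"
    proof (cases "k < m")
      case True then show ?thesis unfolding F_def using star by auto
    next
      case False then show ?thesis unfolding F_def using within_edge[OF a] by auto
    qed
    show "\<exists>r\<in>{(a,c1),(a,c2),(a,c3)}. \<forall>x\<in>{(a,c1),(a,c2),(a,c3)}. (r,x) \<in> (adj (F k))\<^sup>*"
    proof (cases "k < m")
      case True
      have "\<forall>x\<in>{(a,c1),(a,c2),(a,c3)}. ((b,k),x) \<in> (adj (F k))\<^sup>*"
      proof
        fix x assume "x \<in> {(a,c1),(a,c2),(a,c3)}"
        then obtain p where p: "x = (a,p)" "p < m" using c by auto
        have "{(a,p),(b,k)} \<in> F k" using True p(2) unfolding F_def by auto
        then show "((b,k),x) \<in> (adj (F k))\<^sup>*" unfolding p(1) by (rule adj_edge')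
      qed
      then show ?thesis by (rule root_lemma[rotated]) simp
    next
      case False
      have E: "{(a,p),(a,Suc p)} \<in> F k" if "Suc p < m" for p using False that unfolding F_def by auto
      have "\<forall>x\<in>{(a,c1),(a,c2),(a,c3)}. ((a,0),x) \<in> (adj (F k))\<^sup>*"
        using within_gen[of m a "F k", OF E] c by auto
      then show ?thesis by (rule root_lemma[rotated]) simp
    qed
  next
    fix i j assume ij: "i \<le> m" "j \<le> m" "i \<noteq> j"
    show "F i \<inter> F j = {}"
    proof (rule ccontr)
      assume "F i \<inter> F j \<noteq> {}"
      then obtain e where e: "e \<in> F i" "e \<in> F j" by blast
      show False
      proof (cases "i < m \<and> j < m")
        case True
        from e(1) True obtain p where ep: "e = {(a,p),(b,i)}" unfolding F_def by auto
        from e(2) True obtain p' where ep': "e = {(a,p'),(b,j)}" unfolding F_def by auto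
        have "((a,p) = (a,p') \<and> (b,i) = (b,j)) \<or> ((a,p) = (b,j) \<and> (b,i) = (a,p'))"
          using ep ep' doubleton_eq_iff by metis
        then show False using ab ij by auto
      next
        case False
        then have "(i = m \<and> j < m) \<or> (j = m \<and> i < m)" using ij by auto
        then obtain s t where st: "e \<in> F s" "e \<in> F t" "s < m" "t = m" using e by blast
        from st(1,3) obtain p where ep: "e = {(a,p),(b,s)}" unfolding F_def by auto
        from st(2,4) obtain p' where ep': "e = {(a,p'),(a,Suc p')}" unfolding F_def by auto
        from ep ep' have "{(a,p),(b,s)} = {(a,p'),(a,Suc p')}" by simp
        then have "((a,p) = (a,p') \<and> (b,s) = (a,Suc p')) \<or> ((a,p) = (a,Suc p') \<and> (b,s) = (a,p'))"
          by (rule doubleton_eq_iff[THEN iffD1])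
        then show False using ab by auto
      qed
    qed
  qed
qed



definition rf :: "nat \<Rightarrow> nat \<times> nat \<Rightarrow> nat \<times> nat" where
  "rf n v = (n - 1 - fst v, snd v)"

lemma rf_rf: "fst v < n \<Longrightarrow> rf n (rf n v) = v"
  by (cases v) (simp add: rf_def)

lemma rf_edge:
  assumes "e \<in> edges (LG n m)" shows "rf n ` e \<in> edges (LG n m)"
  using edge_cases[OF assms]
proof
  assume "\<exists>l p q. Suc l < n \<and> p < m \<and> q < m \<and> e = {(l,p),(Suc l,q)}"
  then obtain l p q where l: "Suc l < n" "p < m" "q < m" "e = {(l,p),(Suc l,q)}" by blast
  define l' where "l' = n - 2 - l"
  have "rf n ` e = {(l'+1,p),(l',q)}" using l unfolding l'_def rf_def by auto
  moreover have "{(l'+1,p),(l',q)} \<in> edges (LG n m)"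
    using l unfolding l'_def by (intro cross_edge') auto
  ultimately show ?thesis by simp
next
  assume "\<exists>l p. l < n \<and> Suc p < m \<and> e = {(l,p),(l,Suc p)}"
  then obtain l p where l: "l < n" "Suc p < m" "e = {(l,p),(l,Suc p)}" by blast
  have "rf n ` e = {(n - 1 - l,p),(n - 1 - l,p+1)}" using l unfolding rf_def by auto
  moreover have "{(n - 1 - l,p),(n - 1 - l,p+1)} \<in> edges (LG n m)"
    using l by (intro within_edge) auto
  ultimately show ?thesis by simp
qed

lemma rf_rf_set: "e \<in> edges (LG n m) \<Longrightarrow> rf n ` (rf n ` e) = e"
proof -
  assume "e \<in> edges (LG n m)"
  then have "\<forall>v\<in>e. fst v < n" using edges_LG_sub by fastforce
  then show ?thesis by (simp add: image_image rf_rf)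
qed

lemma rf_reach:
  "(x,y) \<in> (adj E)\<^sup>* \<Longrightarrow> (rf n x, rf n y) \<in> (adj ((\<lambda>e. rf n ` e) ` E))\<^sup>*"
proof (induction rule: rtrancl_induct)
  case base then show ?case by simp
next
  case (step y z)
  then have "{y,z} \<in> E" by (simp add: adj_def)
  then have "rf n ` {y,z} \<in> (\<lambda>e. rf n ` e) ` E" by blast
  then have "{rf n y, rf n z} \<in> (\<lambda>e. rf n ` e) ` E" by simp
  then show ?case using step(3) by (meson adj_edge rtrancl_trans)
qed

lemma good_reflect:
  assumes g: "good n m S" shows "good n m (rf n ` S)"
proof -
  obtain F where F: "\<forall>k\<le>m. F k \<subseteq> edges (LG n m) \<and> (\<exists>r\<in>S. \<forall>x\<in>S. (r,x) \<in> (adj (F k))\<^sup>*)"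
    and dis: "\<forall>i\<le>m. \<forall>j\<le>m. i \<noteq> j \<longrightarrow> F i \<inter> F j = {}"
    using g unfolding good_def by blast
  define F' where "F' k = (\<lambda>e. rf n ` e) ` F k" for k
  show ?thesis unfolding good_def
  proof (intro exI[of _ F'] conjI allI impI)
    fix k assume k: "k \<le> m"
    show "F' k \<subseteq> edges (LG n m)" using F k rf_edge unfolding F'_def by blast
    obtain r where r: "r \<in> S" "\<forall>x\<in>S. (r,x) \<in> (adj (F k))\<^sup>*" using F k by blast
    show "\<exists>r\<in>rf n ` S. \<forall>x\<in>rf n ` S. (r,x) \<in> (adj (F' k))\<^sup>*"
    proof (intro bexI[of _ "rf n r"] ballI)
      fix x' assume "x' \<in> rf n ` S"
      then obtain x where x: "x \<in> S" "x' = rf n x" by blast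
      show "(rf n r, x') \<in> (adj (F' k))\<^sup>*"
        unfolding x(2) F'_def using rf_reach r(2) x(1) by blast
    qed (use r in blast)
  next
    fix i j assume ij: "i \<le> m" "j \<le> m" "i \<noteq> j"
    show "F' i \<inter> F' j = {}"
    proof (rule ccontr)
      assume "F' i \<inter> F' j \<noteq> {}"
      then obtain e1 e2 where e: "e1 \<in> F i" "e2 \<in> F j" "rf n ` e1 = rf n ` e2"
        unfolding F'_def by blast
      have "e1 \<in> edges (LG n m)" "e2 \<in> edges (LG n m)" using F e ij by blast+
      then have "e1 = e2" using e(3) rf_rf_set by metis
      then show False using e dis ij by blast
    qed
  qed
qed

lemma good_B0:
  assumes n: "n \<ge> 3" and m: "m \<ge> 3" and ab: "a \<noteq> b" "Suc a < n" "b < n" "\<not> (a + 2 = n \<and> Suc b = n)"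
    and c: "c < m" "c' < m" "d < m" "c \<noteq> c'"
  shows "good n m {(a,c),(a,c'),(b,d)}"
proof -
  define u where "u l = (if l = a then c else if l = b then d else 0)" for l
  define \<kappa> where "\<kappa> = sw c c'"
  define s1 where "s1 = (if \<kappa> = 1 then 2 else (1::nat))"
  define s2 where "s2 = (if \<kappa> = 1 then 1 else (2::nat))"
  have k0: "\<kappa> \<noteq> 0" using c(4) unfolding \<kappa>_def sw_def by auto
  have fw: "fw n m u \<kappa> s1 s2"
  proof
    show "3 \<le> n" "3 \<le> m" by (rule n, rule m)
    show "u l < m" for l using c m unfolding u_def by auto
    show "0 < \<kappa>" using k0 by simp
    show "\<kappa> < m" unfolding \<kappa>_def using sw_lt c by blast
    show "0 < s1" "s1 < m" "0 < s2" "s2 < m" "s1 \<noteq> \<kappa>" "s2 \<noteq> s1"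
      using m unfolding s1_def s2_def by auto
  qed
  have ua: "u a = c" and ub: "u b = d" using ab unfolding u_def by auto
  have x': "(a, c') = (a, sw (u a) \<kappa>)" unfolding ua \<kappa>_def by simp
  show ?thesis
  proof (rule fw.good_fw[OF fw, where a=a])
    show "{(a,c),(a,c'),(b,d)} \<noteq> {}" by simp
    show "\<forall>v\<in>{(a,c),(a,c'),(b,d)}. (\<exists>l. l<n \<and> v = (l, u l) \<and> (Suc l = n \<longrightarrow> a+2 \<noteq> n)) \<or>
                  (v = (a, sw (u a) \<kappa>) \<and> Suc a < n)"
    proof
      fix v assume "v \<in> {(a,c),(a,c'),(b,d)}"
      then consider "v = (a,c)" | "v = (a,c')" | "v = (b,d)" by blast
      then show "(\<exists>l. l<n \<and> v = (l, u l) \<and> (Suc l = n \<longrightarrow> a+2 \<noteq> n)) \<or>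
                  (v = (a, sw (u a) \<kappa>) \<and> Suc a < n)"
      proof cases
        case 1 then show ?thesis using ab ua by auto
      next
        case 2 then show ?thesis using ab x' by auto
      next
        case 3 then show ?thesis using ab ub by auto
      qed
    qed
  qed
qed

lemma good_B:
  assumes n: "n \<ge> 3" and m: "m \<ge> 3" and ab: "a \<noteq> b" "a < n" "b < n"
    and c: "c < m" "c' < m" "d < m" "c \<noteq> c'"
  shows "good n m {(a,c),(a,c'),(b,d)}"
proof (cases "Suc a < n \<and> \<not> (a + 2 = n \<and> Suc b = n)")
  case True then show ?thesis using good_B0[OF n m ab(1) _ ab(3) _ c] by blast
next
  case False
  define a' where "a' = n - 1 - a"
  define b' where "b' = n - 1 - b"
  have ab': "a' \<noteq> b'" "Suc a' < n" "b' < n" "\<not> (a' + 2 = n \<and> Suc b' = n)"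
    using False ab n unfolding a'_def b'_def by auto
  have g: "good n m {(a',c),(a',c'),(b',d)}" by (rule good_B0[OF n m ab' c])
  have "rf n ` {(a',c),(a',c'),(b',d)} = {(a,c),(a,c'),(b,d)}"
    using ab unfolding rf_def a'_def b'_def by auto
  with good_reflect[OF g] show ?thesis by simp
qed

lemma good_C:
  assumes n: "n \<ge> 3" and m: "m \<ge> 3" and a: "a1 < n" "a2 < n" "a3 < n"
    and d: "a1 \<noteq> a2" "a1 \<noteq> a3" "a2 \<noteq> a3" and c: "c1 < m" "c2 < m" "c3 < m"
  shows "good n m {(a1,c1),(a2,c2),(a3,c3)}"
proof -
  define u where "u l = (if l = a1 then c1 else if l = a2 then c2 else if l = a3 then c3 else 0)" for l
  have fw: "fw n m u 1 2 1"
  proof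
    show "3 \<le> n" "3 \<le> m" by (rule n, rule m)
    show "u l < m" for l using c m unfolding u_def by auto
  qed (use m in auto)
  have u: "u a1 = c1" "u a2 = c2" "u a3 = c3" using d unfolding u_def by auto
  show ?thesis
  proof (rule fw.good_fw[OF fw, where a=n])
    show "{(a1,c1),(a2,c2),(a3,c3)} \<noteq> {}" by simp
    show "\<forall>v\<in>{(a1,c1),(a2,c2),(a3,c3)}. (\<exists>l. l<n \<and> v = (l, u l) \<and> (Suc l = n \<longrightarrow> n+2 \<noteq> n)) \<or>
                  (v = (n, sw (u n) 1) \<and> Suc n < n)"
      using a u by auto
  qed
qed



lemma good_all:
  assumes n: "n \<ge> 3" and m: "m \<ge> 3" and S: "S \<subseteq> verts (LG n m)" "card S = 3"
  shows "good n m S"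
proof -
  obtain x y z where xyz: "S = {x,y,z}" "x \<noteq> y" "y \<noteq> z" "x \<noteq> z"
    using S(2) card_3_iff by metis
  obtain a1 c1 a2 c2 a3 c3 where v: "x = (a1,c1)" "y = (a2,c2)" "z = (a3,c3)"
    by (cases x, cases y, cases z) auto
  have b: "a1 < n" "a2 < n" "a3 < n" "c1 < m" "c2 < m" "c3 < m"
    using S(1) xyz(1) v verts_LG by auto
  show ?thesis
  proof (cases "a1 = a2")
    case T12: True
    show ?thesis
    proof (cases "a2 = a3")
      case True
      then show ?thesis using good_A[OF n b(1) b(4) b(5) b(6)] xyz(1) v T12 by simp
    next
      case False
      have "c1 \<noteq> c2" using xyz(2) v T12 by auto
      then have "good n m {(a1,c1),(a1,c2),(a3,c3)}"
        using good_B[OF n m _ b(1) b(3) b(4) b(5) b(6)] False T12 by simp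
      then show ?thesis using xyz(1) v T12 by simp
    qed
  next
    case F12: False
    show ?thesis
    proof (cases "a1 = a3")
      case True
      have "c1 \<noteq> c3" using xyz(4) v True by auto
      then have "good n m {(a1,c1),(a1,c3),(a2,c2)}"
        using good_B[OF n m _ b(1) b(2) b(4) b(6) b(5)] F12 by simp
      moreover have "{(a1,c1),(a1,c3),(a2,c2)} = S" using xyz(1) v True by auto
      ultimately show ?thesis by simp
    next
      case F13: False
      show ?thesis
      proof (cases "a2 = a3")
        case True
        have "c2 \<noteq> c3" using xyz(3) v True by auto
        then have "good n m {(a2,c2),(a2,c3),(a1,c1)}"
          using good_B[OF n m _ b(2) b(1) b(5) b(6) b(4)] F12 by simp
        moreover have "{(a2,c2),(a2,c3),(a1,c1)} = S" using xyz(1) v True by auto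
        ultimately show ?thesis by simp
      next
        case False
        then show ?thesis using good_C[OF n m b(1) b(2) b(3) F12 F13 False b(4) b(5) b(6)] xyz(1) v
          by simp
      qed
    qed
  qed
qed

lemma edges_at_00: "card {e \<in> edges (LG n m). (0,0) \<in> e} \<le> m + 1"
proof -
  have sub: "{e \<in> edges (LG n m). (0,0) \<in> e} \<subseteq> (\<lambda>q. {(0,0),(1,q)}) ` {..<m} \<union> {{(0,0),(0,1)}}"
  proof
    fix e assume e: "e \<in> {e \<in> edges (LG n m). (0,0) \<in> e}"
    then have e1: "e \<in> edges (LG n m)" and e2: "(0,0) \<in> e" by auto
    from edge_cases[OF e1] show "e \<in> (\<lambda>q. {(0,0),(1,q)}) ` {..<m} \<union> {{(0,0),(0,1)}}"
    proof
      assume "\<exists>l p q. Suc l < n \<and> p < m \<and> q < m \<and> e = {(l,p),(Suc l,q)}"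
      then obtain l p q where l: "Suc l < n" "p < m" "q < m" "e = {(l,p),(Suc l,q)}" by blast
      then have "l = 0" "p = 0" using e2 by auto
      then show ?thesis using l by auto
    next
      assume "\<exists>l p. l < n \<and> Suc p < m \<and> e = {(l,p),(l,Suc p)}"
      then obtain l p where l: "l < n" "Suc p < m" "e = {(l,p),(l,Suc p)}" by blast
      then have "l = 0" "p = 0" using e2 by auto
      then show ?thesis using l by auto
    qed
  qed
  have "card {e \<in> edges (LG n m). (0,0) \<in> e} \<le> card ((\<lambda>q. {(0::nat,0::nat),(1,q)}) ` {..<m} \<union> {{(0::nat,0::nat),(0,1)}})"
    using sub by (intro card_mono) simp_all
  also have "\<dots> \<le> card ((\<lambda>q. {(0::nat,0::nat),(1,q)}) ` {..<m}) + card {{(0::nat,0::nat),(0,1)}}"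
    by (rule card_Un_le)
  also have "\<dots> \<le> m + 1" using card_image_le[of "{..<m}" "\<lambda>q. {(0::nat,0::nat),(1,q)}"] by simp
  finally show ?thesis .
qed

theorem corollary3p5:
  fixes n1 n2 :: nat
  assumes "n1 \<ge> 3" and "n2 \<ge> 3"
  shows "lambda3 (lex_prod (path_graph n1) (path_graph n2)) = n2 + 1"
proof -
  let ?G = "LG n1 n2"
  have lower: "n2 + 1 \<le> lambda_S ?G S" if S: "S \<subseteq> verts ?G" "card S = 3" for S
  proof -
    obtain x y z where xyz: "S = {x,y,z}" "x \<noteq> y" using S(2) card_3_iff by metis
    show ?thesis using lambda_ge[OF good_all[OF assms S] S(1), of x y] xyz by simp
  qed
  define S0 where "S0 = {(0::nat,0::nat),(0,1),(0,2)}"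
  have S0: "S0 \<subseteq> verts ?G" "card S0 = 3" using assms unfolding S0_def verts_LG by auto
  have up: "lambda_S ?G S0 \<le> n2 + 1"
  proof -
    have ne: "TS ?G S0 \<noteq> {}" using good_TS[OF good_all[OF assms S0] S0(1)] by blast
    have "k \<le> n2 + 1" if "k \<in> TS ?G S0" for k
    proof -
      have "k \<le> card {e \<in> edges ?G. (0,0) \<in> e}"
        using TS_bound[where v="(0,0)" and w="(0,1)" and S=S0, OF finite_edges_LG _ _ _ that]
        by (simp add: S0_def)
      then show ?thesis using edges_at_00[of n1 n2] by linarith
    qed
    then show ?thesis unfolding lambda_S_TS using ne by (intro cSup_least) auto
  qed
  have eq0: "lambda_S ?G S0 = n2 + 1" using up lower[OF S0] by simp
  show ?thesis unfolding lambda3_def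
  proof (rule cInf_eq_minimum)
    show "n2 + 1 \<in> {lambda_S ?G S |S. S \<subseteq> verts ?G \<and> card S = 3}"
    proof -
      have "lambda_S ?G S0 \<in> {lambda_S ?G S |S. S \<subseteq> verts ?G \<and> card S = 3}"
        by (rule CollectI, intro exI[of _ S0] conjI refl S0(1) S0(2))
      then show ?thesis using eq0 by simp
    qed
    fix x assume "x \<in> {lambda_S ?G S |S. S \<subseteq> verts ?G \<and> card S = 3}"
    then obtain S where "x = lambda_S ?G S" "S \<subseteq> verts ?G" "card S = 3" by blast
    then show "n2 + 1 \<le> x" using lower by simp
  qed
qed


end
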